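(* Let $k>4$ be even and let $f:\mathbb{Z}_k\to\mathbb{Z}_k$. If there is some $y\in\mathbb{Z}_k$ such that the equation $f(x)=y$ has more than $k/2$ solutions $x\in\mathbb{Z}_k$, then $f$ is not semi-planar.
   Context: $\mathbb{Z}_k$ denotes the additive cyclic group of integers modulo $k$. A function $f:\mathbb{Z}_k\to\mathbb{Z}_k$ is semi-planar if for every non-zero $a\in\mathbb{Z}_k$ and every $y\in\mathbb{Z}_k$, the equation $f(x+a)-f(x)=y$ has either $0$ or $2$ solutions $x\in\mathbb{Z}_k$. *)

theory Defs
  imports Main
begin

text \<open>Z_k is modelled as the carrier {0..<k} of naturals with arithmetic mod k.
  A function f : Z_k -> Z_k is a function nat => nat taking values in {0..<k} on {0..<k}.\<close>

definition zk_fun :: "nat \<Rightarrow> (nat \<Rightarrow> nat) \<Rightarrow> bool" where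
  "zk_fun k f \<longleftrightarrow> (\<forall>x\<in>{0..<k}. f x \<in> {0..<k})"

definition semi_planar :: "nat \<Rightarrow> (nat \<Rightarrow> nat) \<Rightarrow> bool" where
  "semi_planar k f \<longleftrightarrow>
     (\<forall>a\<in>{1..<k}. \<forall>y\<in>{0..<k}.
        card {x\<in>{0..<k}. (f ((x + a) mod k) + k - f x) mod k = y} \<in> {0, 2})"

end

theory Submission
  imports Defs
begin

lemma modk: "x < (k::nat) \<Longrightarrow> a < k \<Longrightarrow> (x + a) mod k = (if x + a < k then x + a else x + a - k)"
  by (simp add: le_mod_geq)

lemma modinj: "x < (k::nat) \<Longrightarrow> a < k \<Longrightarrow> b < k \<Longrightarrow> (x + a) mod k = (x + b) mod k \<Longrightarrow> a = b"
  by (simp add: modk split: if_splits)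

lemma modne: "x < (k::nat) \<Longrightarrow> a < k \<Longrightarrow> 0 < a \<Longrightarrow> (x + a) mod k \<noteq> x"
  by (simp add: modk split: if_splits) arith

lemma modinv: "x < (k::nat) \<Longrightarrow> z < k \<Longrightarrow> (x + (z + k - x) mod k) mod k = z"
  by (simp add: mod_add_right_eq)

lemma le2_helper: "(c::nat) \<in> {0,2} \<Longrightarrow> c \<le> 2" by auto

lemma shift_card:
  fixes k x :: nat and S :: "nat set"
  assumes "S \<subseteq> {0..<k}" "x \<in> S"
  shows "card {a\<in>{1..<k}. (x + a) mod k \<in> S} = card S - 1"
proof -
  have xk: "x < k" using assms by auto
  have inj: "inj_on (\<lambda>a. (x + a) mod k) {a\<in>{1..<k}. (x + a) mod k \<in> S}"
  proof (rule inj_onI)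
    fix a b assume a: "a \<in> {a\<in>{1..<k}. (x + a) mod k \<in> S}" and b: "b \<in> {a\<in>{1..<k}. (x + a) mod k \<in> S}"
      and e: "(x + a) mod k = (x + b) mod k"
    thus "a = b" using a b xk modinj[of x k a b] by simp
  qed
  have img: "(\<lambda>a. (x + a) mod k) ` {a\<in>{1..<k}. (x + a) mod k \<in> S} = S - {x}"
  proof
    show "(\<lambda>a. (x + a) mod k) ` {a\<in>{1..<k}. (x + a) mod k \<in> S} \<subseteq> S - {x}"
    proof clarify
      fix a assume "a \<in> {1..<k}" "(x + a) mod k \<in> S" "(x + a) mod k = x"
      thus False using \<open>a \<in> {1..<k}\<close> xk modne[of x k a] by simp
    qed
  next
    show "S - {x} \<subseteq> (\<lambda>a. (x + a) mod k) ` {a\<in>{1..<k}. (x + a) mod k \<in> S}"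
    proof
      fix z assume z: "z \<in> S - {x}"
      hence zk: "z < k" using assms by auto
      define a where "a = (z + k - x) mod k"
      have e: "(x + a) mod k = z" unfolding a_def using modinv[OF xk zk] .
      have "a \<noteq> 0"
      proof
        assume "a = 0" then have "x mod k = z" using e by simp
        thus False using z xk by simp
      qed
      moreover have "a < k" unfolding a_def using xk by simp
      ultimately show "z \<in> (\<lambda>a. (x + a) mod k) ` {a\<in>{1..<k}. (x + a) mod k \<in> S}"
        using e z by (auto intro!: image_eqI[where x=a])
    qed
  qed
  have "finite S" using assms(1) finite_subset by blast
  have "card {a\<in>{1..<k}. (x + a) mod k \<in> S} = card (S - {x})"
    using card_image[OF inj] img by simp
  also have "\<dots> = card S - 1" using assms(2) \<open>finite S\<close> by simp
  finally show ?thesis .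
qed

theorem lemma7:
  fixes k :: nat and f :: "nat \<Rightarrow> nat"
  assumes "even k" and "k > 4"
    and "zk_fun k f"
    and "\<exists>y\<in>{0..<k}. 2 * card {x\<in>{0..<k}. f x = y} > k"
  shows "\<not> semi_planar k f"
proof
  assume sp: "semi_planar k f"
  obtain y where y: "2 * card {x\<in>{0..<k}. f x = y} > k" using assms(4) by blast
  define S where "S = {x\<in>{0..<k}. f x = y}"
  have Ssub: "S \<subseteq> {0..<k}" unfolding S_def by auto
  have fS: "finite S" using Ssub finite_subset by blast
  have fv: "\<And>x. x < k \<Longrightarrow> f x < k" using assms(3) unfolding zk_fun_def by auto
  have le2: "card {x\<in>S. (x + a) mod k \<in> S} \<le> 2" if a: "a \<in> {1..<k}" for a
  proof -
    have "{x\<in>S. (x + a) mod k \<in> S} \<subseteq> {x\<in>{0..<k}. (f ((x + a) mod k) + k - f x) mod k = 0}"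
      unfolding S_def by auto
    hence "card {x\<in>S. (x + a) mod k \<in> S} \<le> card {x\<in>{0..<k}. (f ((x + a) mod k) + k - f x) mod k = 0}"
      by (intro card_mono) auto
    moreover have "card {x\<in>{0..<k}. (f ((x + a) mod k) + k - f x) mod k = 0} \<le> 2"
    proof -
      have H: "\<forall>y\<in>{0..<k}. card {x\<in>{0..<k}. (f ((x + a) mod k) + k - f x) mod k = y} \<in> {0,2}"
        using sp a unfolding semi_planar_def by blast
      have "0 \<in> {0..<k}" using assms(2) by simp
      from bspec[OF H this] show ?thesis by (rule le2_helper)
    qed
    ultimately show ?thesis by linarith
  qed
  have "(\<Sum>a\<in>{1..<k}. card {x\<in>S. (x + a) mod k \<in> S}) \<le> (\<Sum>a\<in>{1..<k}. 2)"
    by (rule sum_mono) (use le2 in auto)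
  hence A: "(\<Sum>a\<in>{1..<k}. card {x\<in>S. (x + a) mod k \<in> S}) \<le> 2 * (k - 1)" by simp
  have "(\<Sum>a\<in>{1..<k}. card {x\<in>S. (x + a) mod k \<in> S})
      = (\<Sum>a\<in>{1..<k}. \<Sum>x\<in>S. if (x + a) mod k \<in> S then 1 else 0)"
    using fS by (simp add: sum.If_cases Int_def)
  also have "\<dots> = (\<Sum>x\<in>S. \<Sum>a\<in>{1..<k}. if (x + a) mod k \<in> S then 1 else 0)"
    by (rule sum.swap)
  also have "\<dots> = (\<Sum>x\<in>S. card {a\<in>{1..<k}. (x + a) mod k \<in> S})"
    by (simp add: sum.If_cases Int_def)
  also have "\<dots> = (\<Sum>x\<in>S. card S - 1)"
    by (rule sum.cong) (use shift_card[OF Ssub] in auto)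
  also have "\<dots> = card S * (card S - 1)" by simp
  finally have B: "card S * (card S - 1) \<le> 2 * (k - 1)" using A by simp
  obtain m where m: "k = 2 * m" using assms(1) by blast
  have m3: "m \<ge> 3" using assms(2) m by simp
  have c: "card S \<ge> m + 1" using y m unfolding S_def by simp
  have "(m + 1) * m \<le> card S * (card S - 1)" using c by (intro mult_mono) auto
  with B m have "(m + 1) * m \<le> 2 * (2 * m - 1)" by simp
  moreover have "2 * (2 * m - 1) < (m + 1) * m" using m3
  proof -
    have "(m+1)*m = m*m + m" by simp
    moreover have "m * m \<ge> 3 * m" using m3 by simp
    ultimately show ?thesis using m3 by linarith
  qed
  ultimately show False by simp
qed

end
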